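(* Fix $f \in (0,1)$, integers $p, q \ge 2$, and $r_1,\dots,r_{n} \in [0,1)$. Then there is a decomposition of $\mathcal{D}_f^{p,q}$ by at most $n$ hyperplanes (lines in the $(s_1,s_2)$-plane) such that, within each region of the decomposition, each of the functions $(s_1,s_2)\mapsto \pi_{f,s_1,s_2}^{p,q}(r_j)$, $j=1,\dots,n$, is a fixed affine linear function of $(s_1, s_2)$.
   Context: For $f\in(0,1)$, integers $p,q\ge 2$ and $s_1,s_2\in\mathbb{R}$, define for $r\in[0,1)$ $$\pi_{f,s_1,s_2}^{p,q}(r) = \max \Big( \big\{\min\{\phi_i^1(r),\phi_i^2(r)\}:i=1,\dots,p\big\}\cup\big\{ \min\{ \psi_j^1(r),\psi_j^2(r) \}: j=1,\dots,q-1 \big\} \Big),$$ where $\phi_i^1(r) = s_1 r + i \frac{1-fs_1}{p}$, $\phi_i^2(r) = s_2 r + (i-1)\frac{1-fs_2}{p-1}$ for $i=1,\dots,p$, and $\psi_j^1(r) = s_1(r-1) + (j-1) \frac{1+(1-f)s_1}{q-1}$, $\psi_j^2(r) = s_2(r-1) + j \frac{1+(1-f)s_2}{q}$ for $j=1,\dots,q-1$. $\mathcal{D}_f^{p,q}$ is the set of $(s_1,s_2)$ for which this function (extended with period $1$) is a valid cut generating function, namely $\pi(0)=0$, $\pi(f)=1$, $\pi$ subadditive and $1$-periodic; explicitly, $\mathcal{D}_f^{p,q} = I_1\times I_2$ where $I_1=\left[\frac{p+q-1}{(p+q-1)f-p},\frac{1}{f-1}\right]$ if $(p+q-1)f-p<0$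 and $I_1=\left(-\infty,\frac{1}{f-1}\right]$ otherwise, and $I_2=\left[\frac1f,\frac{p+q-1}{q-(p+q-1)(1-f)}\right]$ if $(p+q-1)(1-f)-q<0$ and $I_2=\left[\frac1f,+\infty\right)$ otherwise. *)

theory Defs
  imports "HOL-Analysis.Analysis"
begin

text \<open>The function pi^{p,q}_{f,s1,s2} evaluated at r (formula valid for r in [0,1)).\<close>
definition cgf_pi :: "real \<Rightarrow> nat \<Rightarrow> nat \<Rightarrow> real \<Rightarrow> real \<Rightarrow> real \<Rightarrow> real" where
  "cgf_pi f p q s1 s2 r =
     Max ((\<lambda>i::nat. min (s1 * r + real i * (1 - f * s1) / real p)
                         (s2 * r + (real i - 1) * (1 - f * s2) / (real p - 1))) ` {1..p}
        \<union> (\<lambda>j::nat. min (s1 * (r - 1) + (real j - 1) * (1 + (1 - f) * s1) / (real q - 1))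
                         (s2 * (r - 1) + real j * (1 + (1 - f) * s2) / real q)) ` {1..q-1})"

definition I1 :: "real \<Rightarrow> nat \<Rightarrow> nat \<Rightarrow> real set" where
  "I1 f p q = (if (real p + real q - 1) * f - real p < 0
     then {(real p + real q - 1) / ((real p + real q - 1) * f - real p) .. 1 / (f - 1)}
     else {.. 1 / (f - 1)})"

definition I2 :: "real \<Rightarrow> nat \<Rightarrow> nat \<Rightarrow> real set" where
  "I2 f p q = (if (real p + real q - 1) * (1 - f) - real q < 0
     then {1 / f .. (real p + real q - 1) / (real q - (real p + real q - 1) * (1 - f))}
     else {1 / f ..})"

definition D_dom :: "real \<Rightarrow> nat \<Rightarrow> nat \<Rightarrow> (real \<times> real) set" where
  "D_dom f p q = I1 f p q \<times> I2 f p q"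

definition line_of :: "real \<times> real \<times> real \<Rightarrow> (real \<times> real) set" where
  "line_of l = (case l of (a, b, c) \<Rightarrow> {(x, y). a * x + b * y = c})"

end

theory Submission
  imports Defs
begin
lemma tentA:
  fixes u w :: "nat \<Rightarrow> real"
  assumes "1 \<le> k" "k \<le> N"
    and um: "\<And>i j. 1 \<le> i \<Longrightarrow> i \<le> j \<Longrightarrow> j \<le> N \<Longrightarrow> u j \<le> u i"
    and wm: "\<And>i j. 1 \<le> i \<Longrightarrow> i \<le> j \<Longrightarrow> j \<le> N \<Longrightarrow> w i \<le> w j"
    and l: "k > 1 \<Longrightarrow> w (k-1) \<le> u k" and r: "k < N \<Longrightarrow> u (k+1) \<le> w k"
  shows "Max ((\<lambda>i. min (w i) (u i)) ` {1..N}) = min (w k) (u k)"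
proof (rule Max_eqI)
  show "finite ((\<lambda>i. min (w i) (u i)) ` {1..N})" by simp
  show "min (w k) (u k) \<in> (\<lambda>i. min (w i) (u i)) ` {1..N}" using assms(1,2) by auto
  fix y assume "y \<in> (\<lambda>i. min (w i) (u i)) ` {1..N}"
  then obtain i where i: "1 \<le> i" "i \<le> N" "y = min (w i) (u i)" by auto
  consider "i < k" | "i = k" | "i > k" by linarith
  then show "y \<le> min (w k) (u k)"
  proof cases
    case 1
    then have "w i \<le> w (k-1)" using wm[of i "k-1"] i assms by auto
    moreover have "w (k-1) \<le> w k" using wm[of "k-1" k] i 1 assms by auto
    ultimately show ?thesis using l 1 i by auto
  next
    case 2 then show ?thesis using i by simp
  next
    case 3
    then have "u i \<le> u (k+1)" using um[of "k+1" i] i assms by auto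
    moreover have "u (k+1) \<le> u k" using um[of k "k+1"] i 3 assms by auto
    ultimately show ?thesis using r 3 i by auto
  qed
qed

lemma tentB:
  fixes u w :: "nat \<Rightarrow> real"
  assumes "1 \<le> k" "k < N"
    and um: "\<And>i j. 1 \<le> i \<Longrightarrow> i \<le> j \<Longrightarrow> j \<le> N \<Longrightarrow> u j \<le> u i"
    and wm: "\<And>i j. 1 \<le> i \<Longrightarrow> i \<le> j \<Longrightarrow> j \<le> N \<Longrightarrow> w i \<le> w j"
    and l: "w k \<le> u k" and r: "u (k+1) \<le> w (k+1)"
  shows "Max ((\<lambda>i. min (w i) (u i)) ` {1..N}) = max (w k) (u (k+1))"
proof (rule Max_eqI)
  show "finite ((\<lambda>i. min (w i) (u i)) ` {1..N})" by simp
  have a: "w k \<in> (\<lambda>i. min (w i) (u i)) ` {1..N}"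
    using assms(1,2) l by (intro image_eqI[of _ _ k]) auto
  have b: "u (k+1) \<in> (\<lambda>i. min (w i) (u i)) ` {1..N}"
    using assms(1,2) r by (intro image_eqI[of _ _ "k+1"]) auto
  show "max (w k) (u (k+1)) \<in> (\<lambda>i. min (w i) (u i)) ` {1..N}"
    using a b by (cases "w k \<le> u (k+1)") (auto simp: max_def)
  fix y assume "y \<in> (\<lambda>i. min (w i) (u i)) ` {1..N}"
  then obtain i where i: "1 \<le> i" "i \<le> N" "y = min (w i) (u i)" by auto
  show "y \<le> max (w k) (u (k+1))"
  proof (cases "i \<le> k")
    case True
    then have "w i \<le> w k" using wm[of i k] i assms by auto
    then show ?thesis using i by auto
  next
    case False
    then have "u i \<le> u (k+1)" using um[of "k+1" i] i assms by auto
    then show ?thesis using i by auto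
  qed
qed

lemma piece_lines:
  fixes F :: "real \<Rightarrow> real \<Rightarrow> real" and D :: "(real \<times> real) set" and H :: "real \<Rightarrow> real \<Rightarrow> real"
  assumes hF: "\<And>s1 s2. (s1, s2) \<in> D \<Longrightarrow> F s1 s2 = H (a1* s1+b1* s2+c1) (a2* s1+b2* s2+c2)"
    and hH: "H = min \<or> H = max"
  shows "\<exists>l::(real\<times>real\<times>real) list. length l \<le> 1 \<and> (\<forall>(a,b,c)\<in>set l. (a,b) \<noteq> (0,0)) \<and>
    (\<forall>C. connected C \<longrightarrow> C \<subseteq> D \<longrightarrow> C \<inter> (\<Union>x\<in>set l. line_of x) = {} \<longrightarrow>
       (\<exists>\<alpha> \<beta> \<gamma>. \<forall>(s1,s2)\<in>C. F s1 s2 = \<alpha>* s1+\<beta>* s2+\<gamma>))"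
proof -
  have key: "\<exists>\<alpha> \<beta> \<gamma>. \<forall>(s1,s2)\<in>C. F s1 s2 = \<alpha>* s1+\<beta>* s2+\<gamma>"
    if C: "C \<subseteq> D" and sg: "(\<forall>(s1,s2)\<in>C. a1* s1+b1* s2+c1 \<le> a2* s1+b2* s2+c2) \<or>
                 (\<forall>(s1,s2)\<in>C. a2* s1+b2* s2+c2 \<le> a1* s1+b1* s2+c1)" for C
  proof -
    have Fv: "F s1 s2 = H (a1 * s1+b1 * s2+c1) (a2 * s1+b2 * s2+c2)" if "(s1,s2) \<in> C" for s1 s2
      using hF C that by blast
    from sg hH consider
      (a) "\<forall>(s1,s2)\<in>C. F s1 s2 = a1 * s1+b1 * s2+c1" | (b) "\<forall>(s1,s2)\<in>C. F s1 s2 = a2 * s1+b2 * s2+c2"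
    proof (elim disjE)
      assume h: "\<forall>(s1,s2)\<in>C. a1 * s1+b1 * s2+c1 \<le> a2 * s1+b2 * s2+c2" and "H = min"
      then have "\<forall>(s1,s2)\<in>C. F s1 s2 = a1 * s1+b1 * s2+c1" using Fv by (auto simp: min_def)
      then show thesis by (rule that(1))
    next
      assume h: "\<forall>(s1,s2)\<in>C. a1 * s1+b1 * s2+c1 \<le> a2 * s1+b2 * s2+c2" and "H = max"
      then have "\<forall>(s1,s2)\<in>C. F s1 s2 = a2 * s1+b2 * s2+c2" using Fv by (auto simp: max_def)
      then show thesis by (rule that(2))
    next
      assume h: "\<forall>(s1,s2)\<in>C. a2 * s1+b2 * s2+c2 \<le> a1 * s1+b1 * s2+c1" and "H = min"
      then have "\<forall>(s1,s2)\<in>C. F s1 s2 = a2 * s1+b2 * s2+c2" using Fv by (auto simp: min_def)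
      then show thesis by (rule that(2))
    next
      assume h: "\<forall>(s1,s2)\<in>C. a2 * s1+b2 * s2+c2 \<le> a1 * s1+b1 * s2+c1" and "H = max"
      then have "\<forall>(s1,s2)\<in>C. F s1 s2 = a1 * s1+b1 * s2+c1" using Fv by (auto simp: max_def)
      then show thesis by (rule that(1))
    qed
    then show ?thesis by cases blast+
  qed
  show ?thesis
  proof (cases "(a1 - a2, b1 - b2) = (0::real, 0::real)")
    case True
    then have e: "a1 = a2" "b1 = b2" by auto
    show ?thesis
    proof (intro exI[of _ "[]"] conjI allI impI)
      fix C :: "(real \<times> real) set" assume "C \<subseteq> D"
      moreover have "(\<forall>(s1,s2)\<in>C. a1* s1+b1* s2+c1 \<le> a2* s1+b2* s2+c2) \<or>
                 (\<forall>(s1,s2)\<in>C. a2* s1+b2* s2+c2 \<le> a1* s1+b1* s2+c1)"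
        using e by (cases "c1 \<le> c2") auto
      ultimately show "\<exists>\<alpha> \<beta> \<gamma>. \<forall>(s1,s2)\<in>C. F s1 s2 = \<alpha>* s1+\<beta>* s2+\<gamma>" by (rule key)
    qed auto
  next
    case False
    show ?thesis
    proof (intro exI[of _ "[(a1-a2, b1-b2, c2-c1)]"] conjI allI impI)
      fix C :: "(real \<times> real) set"
      assume conn: "connected C" and CD: "C \<subseteq> D"
        and dis: "C \<inter> (\<Union>x\<in>set [(a1-a2, b1-b2, c2-c1)]. line_of x) = {}"
      have nz: "\<And>s1 s2. (s1,s2) \<in> C \<Longrightarrow> (a1-a2)* s1 + (b1-b2)* s2 \<noteq> c2 - c1"
        using dis by (auto simp: line_of_def)
      have "(\<forall>(s1,s2)\<in>C. a1* s1+b1* s2+c1 \<le> a2* s1+b2* s2+c2) \<or>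
                 (\<forall>(s1,s2)\<in>C. a2* s1+b2* s2+c2 \<le> a1* s1+b1* s2+c1)"
      proof (rule ccontr)
        assume "\<not> ?thesis"
        then obtain x1 x2 y1 y2 where xy: "(x1,x2) \<in> C" "(y1,y2) \<in> C"
          "a1* x1+b1* x2+c1 < a2* x1+b2* x2+c2" "a2* y1+b2* y2+c2 < a1* y1+b1* y2+c1"
          by force
        have "\<exists>z\<in>C. inner (a1-a2, b1-b2) z = c2 - c1"
          by (rule connected_ivt_hyperplane[OF conn xy(1) xy(2)])
             (use xy in \<open>auto simp: inner_Pair algebra_simps\<close>)
        then obtain z1 z2 where "(z1,z2) \<in> C" "(a1-a2)* z1 + (b1-b2)* z2 = c2 - c1"
          by (auto simp: inner_Pair)
        then show False using nz by blast
      qed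
      then show "\<exists>\<alpha> \<beta> \<gamma>. \<forall>(s1,s2)\<in>C. F s1 s2 = \<alpha>* s1+\<beta>* s2+\<gamma>" using CD by (intro key)
    qed (use False in auto)
  qed
qed

definition UU :: "real \<Rightarrow> nat \<Rightarrow> real \<Rightarrow> real \<Rightarrow> real \<Rightarrow> real" where
  "UU f p s2 r K = s2 * r + (K - 1) * (1 - f * s2) / (real p - 1)"
definition DD :: "real \<Rightarrow> nat \<Rightarrow> real \<Rightarrow> real \<Rightarrow> real \<Rightarrow> real" where
  "DD f p s1 r K = s1 * r + K * (1 - f * s1) / real p"
definition AA :: "real \<Rightarrow> nat \<Rightarrow> real \<Rightarrow> real \<Rightarrow> real \<Rightarrow> real" where
  "AA f q s1 r J = s1 * (r - 1) + (J - 1) * (1 + (1 - f) * s1) / (real q - 1)"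
definition BB :: "real \<Rightarrow> nat \<Rightarrow> real \<Rightarrow> real \<Rightarrow> real \<Rightarrow> real" where
  "BB f q s2 r J = s2 * (r - 1) + J * (1 + (1 - f) * s2) / real q"
definition uu :: "real \<Rightarrow> nat \<Rightarrow> nat \<Rightarrow> real \<Rightarrow> real \<Rightarrow> nat \<Rightarrow> real" where
  "uu f p q s2 r k = (if k \<le> p then UU f p s2 r (real k) else BB f q s2 r (real (p + q - k)))"
definition ww :: "real \<Rightarrow> nat \<Rightarrow> nat \<Rightarrow> real \<Rightarrow> real \<Rightarrow> nat \<Rightarrow> real" where
  "ww f p q s1 r k = (if k \<le> p then DD f p s1 r (real k) else AA f q s1 r (real (p + q - k)))"

lemma pi_eq:
  assumes "p \<ge> 2" "q \<ge> 2"
  shows "cgf_pi f p q s1 s2 r = Max ((\<lambda>k. min (ww f p q s1 r k) (uu f p q s2 r k)) ` {1..p+q-1})"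
proof -
  have s: "{1..p+q-1} = {1..p} \<union> (\<lambda>j. p+q-j) ` {1..q-1}"
  proof (rule set_eqI, rule iffI)
    fix k assume k: "k \<in> {1..p+q-1}"
    show "k \<in> {1..p} \<union> (\<lambda>j. p+q-j) ` {1..q-1}"
    proof (cases "k \<le> p")
      case False
      then have "k = p+q-(p+q-k)" "p+q-k \<in> {1..q-1}" using k by auto
      then show ?thesis by blast
    qed (use k in auto)
  qed (use assms in auto)
  have i1: "(\<lambda>k. min (ww f p q s1 r k) (uu f p q s2 r k)) ` {1..p} =
     (\<lambda>i::nat. min (s1 * r + real i * (1 - f * s1) / real p)
                         (s2 * r + (real i - 1) * (1 - f * s2) / (real p - 1))) ` {1..p}"
    by (rule image_cong) (auto simp: ww_def uu_def UU_def DD_def)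
  have i2: "(\<lambda>k. min (ww f p q s1 r k) (uu f p q s2 r k)) ` ((\<lambda>j. p+q-j) ` {1..q-1}) =
     (\<lambda>j::nat. min (s1 * (r - 1) + (real j - 1) * (1 + (1 - f) * s1) / (real q - 1))
                         (s2 * (r - 1) + real j * (1 + (1 - f) * s2) / real q)) ` {1..q-1}"
    unfolding image_image
  proof (rule image_cong)
    fix j assume j: "j \<in> {1..q-1}"
    then have "\<not> p + q - j \<le> p" "p + q - (p + q - j) = j" by auto
    then show "min (ww f p q s1 r (p + q - j)) (uu f p q s2 r (p + q - j)) =
      min (s1 * (r - 1) + (real j - 1) * (1 + (1 - f) * s1) / (real q - 1))
                         (s2 * (r - 1) + real j * (1 + (1 - f) * s2) / real q)"
      by (simp add: ww_def uu_def AA_def BB_def)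
  qed simp
  show ?thesis unfolding cgf_pi_def s image_Un i1 i2 ..
qed

context
  fixes f :: real and p q :: nat and x y r :: real
  assumes f0: "0 < f" and f1: "f < 1" and p2: "p \<ge> 2" and q2: "q \<ge> 2"
    and hx: "(1 - f) * x \<le> -1" and hy: "f * y \<ge> 1"
begin

lemma x_neg: "x < 0"
proof -
  have "(1 - f) * x < 0" using hx by linarith
  then show ?thesis using f1 by (simp add: mult_less_0_iff)
qed

lemma y_pos: "y > 0"
  using hy f0 by (metis linorder_not_le mult_nonneg_nonpos less_le_not_le zero_less_one order_trans)

lemma UU_anti: "K \<le> K' \<Longrightarrow> UU f p y r K' \<le> UU f p y r K"
proof -
  assume "K \<le> K'"
  have "(1 - f * y) / (real p - 1) \<le> 0" using hy p2 by (simp add: divide_nonpos_pos)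
  then have "(K' - 1) * ((1 - f * y) / (real p - 1)) \<le> (K - 1) * ((1 - f * y) / (real p - 1))"
    using \<open>K \<le> K'\<close> by (intro mult_right_mono_neg) auto
  then show ?thesis by (simp add: UU_def)
qed

lemma DD_mono: "K \<le> K' \<Longrightarrow> DD f p x r K \<le> DD f p x r K'"
proof -
  assume "K \<le> K'"
  have "f * x < 0" using x_neg f0 by (simp add: mult_pos_neg)
  then have "(1 - f * x) / real p \<ge> 0" using p2 by simp
  then have "K * ((1 - f * x) / real p) \<le> K' * ((1 - f * x) / real p)"
    using \<open>K \<le> K'\<close> by (intro mult_right_mono) auto
  then show ?thesis by (simp add: DD_def)
qed

lemma BB_mono: "J \<le> J' \<Longrightarrow> BB f q y r J \<le> BB f q y r J'"
proof -
  assume "J \<le> J'"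
  have "(1 - f) * y \<ge> 0" using f1 y_pos by simp
  then have "(1 + (1 - f) * y) / real q \<ge> 0" using q2 by simp
  then have "J * ((1 + (1 - f) * y) / real q) \<le> J' * ((1 + (1 - f) * y) / real q)"
    using \<open>J \<le> J'\<close> by (intro mult_right_mono) auto
  then show ?thesis by (simp add: BB_def)
qed

lemma AA_anti: "J \<le> J' \<Longrightarrow> AA f q x r J' \<le> AA f q x r J"
proof -
  assume "J \<le> J'"
  have "(1 + (1 - f) * x) / (real q - 1) \<le> 0" using hx q2 by (simp add: divide_nonpos_pos)
  then have "(J' - 1) * ((1 + (1 - f) * x) / (real q - 1)) \<le> (J - 1) * ((1 + (1 - f) * x) / (real q - 1))"
    using \<open>J \<le> J'\<close> by (intro mult_right_mono_neg) auto
  then show ?thesis by (simp add: AA_def)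
qed

lemma UU_BB: "UU f p y r (real p) = BB f q y r (real q)"
  using p2 q2 by (simp add: UU_def BB_def field_simps)

lemma DD_AA: "DD f p x r (real p) = AA f q x r (real q)"
  using p2 q2 by (simp add: DD_def AA_def field_simps)

lemma uu_anti: "1 \<le> i \<Longrightarrow> i \<le> j \<Longrightarrow> j \<le> p+q-1 \<Longrightarrow> uu f p q y r j \<le> uu f p q y r i"
proof -
  assume ij: "1 \<le> i" "i \<le> j" "j \<le> p+q-1"
  consider "j \<le> p" | "p < i" | "i \<le> p" "p < j" by linarith
  then show ?thesis
  proof cases
    case 1 then show ?thesis using ij by (simp add: uu_def UU_anti)
  next
    case 2 then show ?thesis using ij by (simp add: uu_def BB_mono)
  next
    case 3
    then have "uu f p q y r j = BB f q y r (real (p+q-j))" by (simp add: uu_def)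
    also have "\<dots> \<le> BB f q y r (real q)" using 3 by (intro BB_mono) auto
    also have "\<dots> = UU f p y r (real p)" by (simp add: UU_BB)
    also have "\<dots> \<le> UU f p y r (real i)" using 3 by (intro UU_anti) auto
    also have "\<dots> = uu f p q y r i" using 3 by (simp add: uu_def)
    finally show ?thesis .
  qed
qed

lemma ww_mono: "1 \<le> i \<Longrightarrow> i \<le> j \<Longrightarrow> j \<le> p+q-1 \<Longrightarrow> ww f p q x r i \<le> ww f p q x r j"
proof -
  assume ij: "1 \<le> i" "i \<le> j" "j \<le> p+q-1"
  consider "j \<le> p" | "p < i" | "i \<le> p" "p < j" by linarith
  then show ?thesis
  proof cases
    case 1 then show ?thesis using ij by (simp add: ww_def DD_mono)
  next
    case 2 then show ?thesis using ij by (simp add: ww_def AA_anti)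
  next
    case 3
    have "ww f p q x r i = DD f p x r (real i)" using 3 by (simp add: ww_def)
    also have "\<dots> \<le> DD f p x r (real p)" using 3 by (intro DD_mono) auto
    also have "\<dots> = AA f q x r (real q)" by (simp add: DD_AA)
    also have "\<dots> \<le> AA f q x r (real (p+q-j))" using 3 by (intro AA_anti) auto
    also have "\<dots> = ww f p q x r j" using 3 by (simp add: ww_def)
    finally show ?thesis .
  qed
qed

end

context
  fixes f :: real and p q :: nat and x y r :: real
  assumes f0: "0 < f" and f1: "f < 1" and p2: "p \<ge> 2" and q2: "q \<ge> 2"
    and hx: "(1 - f) * x \<le> -1" and hy: "f * y \<ge> 1"
begin

lemma basics: "y - x \<ge> 0" "real p - 1 > 0" "real p > 0" "real q - 1 > 0" "real q > 0"
  "1 - f * x > 0" "1 - f * y \<le> 0" "1 + (1 - f) * x \<le> 0" "1 + (1 - f) * y > 0"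
proof -
  have xn: "x < 0" using x_neg[OF f0 f1 p2 q2 hx hy] .
  have yp: "y > 0" using y_pos[OF f0 f1 p2 q2 hx hy] .
  show "y - x \<ge> 0" "real p - 1 > 0" "real p > 0" "real q - 1 > 0" "real q > 0"
    using xn yp p2 q2 by auto
  have "f * x < 0" using xn f0 by (simp add: mult_pos_neg)
  then show "1 - f * x > 0" by linarith
  show "1 - f * y \<le> 0" "1 + (1 - f) * x \<le> 0" using hx hy by auto
  show "1 + (1 - f) * y > 0" using yp f1 by (simp add: add_pos_nonneg)
qed

lemma nz: "real p \<noteq> 0" "real p - 1 \<noteq> 0" "real q \<noteq> 0" "real q - 1 \<noteq> 0"
  using p2 q2 by auto

lemma lin1: "(A::real) \<le> Y \<Longrightarrow> A - (T1 - T2) = N \<Longrightarrow> 0 \<le> N \<Longrightarrow> Y = a - b \<Longrightarrow> b + T1 \<le> a + T2"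
  by linarith
lemma lin2: "Y \<le> (A::real) \<Longrightarrow> (T1 - T2) - A = N \<Longrightarrow> 0 \<le> N \<Longrightarrow> Y = a - b \<Longrightarrow> a + T2 \<le> b + T1"
  by linarith

lemma exp_r: "(y - x) * r = y * r - x * r" "(y - x) * (r - 1) = y * (r - 1) - x * (r - 1)"
  by (auto simp: algebra_simps)

lemma A1: assumes "1 \<le> K" "(K-1)*f/(real p-1) \<le> r"
  shows "DD f p x r (K-1) \<le> UU f p y r K"
proof -
  note b = basics
  have m: "(y-x)*((K-1)*f/(real p-1)) \<le> (y-x)*r" by (rule mult_left_mono[OF assms(2) b(1)])
  have e: "(y-x)*((K-1)*f/(real p-1)) - ((K-1)*(1-f*x)/real p - (K-1)*(1-f*y)/(real p-1))
      = (K-1)*(1-f*x)/(real p*(real p-1))"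
    using nz by (simp add: divide_simps; simp add: algebra_simps)
  have nn: "(K-1)*(1-f*x)/(real p*(real p-1)) \<ge> 0" using assms(1) b by simp
  note g = lin1[OF m e nn exp_r(1)]
  then show ?thesis using g by (simp add: DD_def UU_def)
qed

lemma A2: assumes "0 \<le> K" "r \<le> K*f/real p"
  shows "UU f p y r (K+1) \<le> DD f p x r K"
proof -
  note b = basics
  have m: "(y-x)*r \<le> (y-x)*(K*f/real p)" by (rule mult_left_mono[OF assms(2) b(1)])
  have e: "K*(1-f*x)/real p - K*(1-f*y)/(real p-1) - (y-x)*(K*f/real p)
      = K*(-(1-f*y))/(real p*(real p-1))"
    using nz by (simp add: divide_simps; simp add: algebra_simps)
  have nn: "K*(-(1-f*y))/(real p*(real p-1)) \<ge> 0" using assms(1) b by simp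
  note g = lin2[OF m e nn exp_r(1)]
  then show ?thesis using g by (simp add: DD_def UU_def)
qed

lemma B1: assumes "K \<le> real p" "K*f/real p \<le> r"
  shows "DD f p x r K \<le> UU f p y r K"
proof -
  note b = basics
  have m: "(y-x)*(K*f/real p) \<le> (y-x)*r" by (rule mult_left_mono[OF assms(2) b(1)])
  have e: "(y-x)*(K*f/real p) - (K*(1-f*x)/real p - (K-1)*(1-f*y)/(real p-1))
      = (-(1-f*y))*(real p - K)/(real p*(real p-1))"
    using nz by (simp add: divide_simps; simp add: algebra_simps)
  have nn: "(-(1-f*y))*(real p - K)/(real p*(real p-1)) \<ge> 0" using assms(1) b by simp
  note g = lin1[OF m e nn exp_r(1)]
  then show ?thesis using g by (simp add: DD_def UU_def)
qed

lemma B2: assumes "K \<le> real p - 1" "r \<le> K*f/(real p-1)"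
  shows "UU f p y r (K+1) \<le> DD f p x r (K+1)"
proof -
  note b = basics
  have m: "(y-x)*r \<le> (y-x)*(K*f/(real p-1))" by (rule mult_left_mono[OF assms(2) b(1)])
  have e: "(K+1)*(1-f*x)/real p - K*(1-f*y)/(real p-1) - (y-x)*(K*f/(real p-1))
      = (1-f*x)*(real p - 1 - K)/(real p*(real p-1))"
    using nz by (simp add: divide_simps; simp add: algebra_simps)
  have nn: "(1-f*x)*(real p - 1 - K)/(real p*(real p-1)) \<ge> 0" using assms(1) b by simp
  note g = lin2[OF m e nn exp_r(1)]
  then show ?thesis using g by (simp add: DD_def UU_def)
qed

lemma QA1: assumes "0 \<le> M" "1 - M*(1-f)/real q \<le> r"
  shows "AA f q x r (M+1) \<le> BB f q y r M"
proof -
  note b = basics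
  have m: "(y-x)*(- (M*(1-f)/real q)) \<le> (y-x)*(r-1)" using assms(2) b(1) by (intro mult_left_mono) auto
  have e: "(y-x)*(- (M*(1-f)/real q)) - (M*(1 + (1-f)*x)/(real q-1) - M*(1 + (1-f)*y)/real q)
      = M*(-(1 + (1-f)*x))/(real q*(real q-1))"
    using nz by (simp add: divide_simps; simp add: algebra_simps)
  have nn: "M*(-(1 + (1-f)*x))/(real q*(real q-1)) \<ge> 0" using assms(1) b by simp
  note g = lin1[OF m e nn exp_r(2)]
  then show ?thesis using g by (simp add: AA_def BB_def)
qed

lemma QA2: assumes "1 \<le> M" "r \<le> 1 - (M-1)*(1-f)/(real q-1)"
  shows "BB f q y r (M-1) \<le> AA f q x r M"
proof -
  note b = basics
  have m: "(y-x)*(r-1) \<le> (y-x)*(- ((M-1)*(1-f)/(real q-1)))" using assms(2) b(1) by (intro mult_left_mono) auto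
  have e: "(M-1)*(1 + (1-f)*x)/(real q-1) - (M-1)*(1 + (1-f)*y)/real q - (y-x)*(- ((M-1)*(1-f)/(real q-1)))
      = (M-1)*(1 + (1-f)*y)/(real q*(real q-1))"
    using nz by (simp add: divide_simps; simp add: algebra_simps)
  have nn: "(M-1)*(1 + (1-f)*y)/(real q*(real q-1)) \<ge> 0" using assms(1) b by simp
  note g = lin2[OF m e nn exp_r(2)]
  then show ?thesis using g by (simp add: AA_def BB_def)
qed

lemma QB1: assumes "M \<le> real q - 1" "1 - M*(1-f)/(real q-1) \<le> r"
  shows "AA f q x r (M+1) \<le> BB f q y r (M+1)"
proof -
  note b = basics
  have m: "(y-x)*(- (M*(1-f)/(real q-1))) \<le> (y-x)*(r-1)" using assms(2) b(1) by (intro mult_left_mono) auto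
  have e: "(y-x)*(- (M*(1-f)/(real q-1))) - (M*(1 + (1-f)*x)/(real q-1) - (M+1)*(1 + (1-f)*y)/real q)
      = (1 + (1-f)*y)*(real q - 1 - M)/(real q*(real q-1))"
    using nz by (simp add: divide_simps; simp add: algebra_simps)
  have nn: "(1 + (1-f)*y)*(real q - 1 - M)/(real q*(real q-1)) \<ge> 0" using assms(1) b by simp
  note g = lin1[OF m e nn exp_r(2)]
  then show ?thesis using g by (simp add: AA_def BB_def)
qed

lemma QB2: assumes "M \<le> real q" "r \<le> 1 - M*(1-f)/real q"
  shows "BB f q y r M \<le> AA f q x r M"
proof -
  note b = basics
  have m: "(y-x)*(r-1) \<le> (y-x)*(- (M*(1-f)/real q))" using assms(2) b(1) by (intro mult_left_mono) auto
  have e: "(M-1)*(1 + (1-f)*x)/(real q-1) - M*(1 + (1-f)*y)/real q - (y-x)*(- (M*(1-f)/real q))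
      = (-(1 + (1-f)*x))*(real q - M)/(real q*(real q-1))"
    using nz by (simp add: divide_simps; simp add: algebra_simps)
  have nn: "(-(1 + (1-f)*x))*(real q - M)/(real q*(real q-1)) \<ge> 0" using assms(1) b by simp
  note g = lin2[OF m e nn exp_r(2)]
  then show ?thesis using g by (simp add: AA_def BB_def)
qed

lemma A2p: assumes "r \<le> f"
  shows "UU f p y r (real p) \<le> DD f p x r (real p)"
proof -
  note b = basics
  have m: "(y-x)*r \<le> (y-x)*f" by (rule mult_left_mono[OF assms b(1)])
  have e: "real p*(1-f*x)/real p - (real p - 1)*(1-f*y)/(real p-1) - (y-x)*f = 0"
    using nz by (simp add: divide_simps; simp add: algebra_simps)
  note g = lin2[OF m e order_refl exp_r(1)]
  then show ?thesis using g by (simp add: DD_def UU_def)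
qed

end

lemma cover:
  assumes "n \<ge> (2::nat)" "0 \<le> t" "t \<le> 1"
  shows "\<exists>i::nat. (1 \<le> i \<and> i \<le> n \<and> (real i - 1)/(real n - 1) \<le> t \<and> t \<le> real i/real n) \<or>
                 (1 \<le> i \<and> i + 1 \<le> n \<and> real i/real n \<le> t \<and> t \<le> real i/(real n - 1))"
proof (cases "t = 1")
  case True
  then show ?thesis using assms by (intro exI[of _ n]) auto
next
  case False
  then have t1: "t < 1" using assms by auto
  have n0: "real n > 1" using assms by auto
  define i0 where "i0 = nat \<lfloor>t * real n\<rfloor>"
  have tn0: "t * real n \<ge> 0" using assms by auto
  have fl: "real i0 \<le> t * real n" "t * real n < real i0 + 1"
    unfolding i0_def using tn0 by (auto simp: of_nat_nat)
  have "t * real n < real n" using t1 n0 by simp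
  then have i0n: "i0 < n" using fl by linarith
  show ?thesis
  proof (cases "real i0 / (real n - 1) \<le> t")
    case True
    show ?thesis
    proof (intro exI[of _ "i0 + 1"] disjI1 conjI)
      show "(real (i0 + 1) - 1) / (real n - 1) \<le> t" using True by simp
      show "t \<le> real (i0 + 1) / real n" using fl n0 by (simp add: field_simps)
    qed (use i0n in auto)
  next
    case False
    then have lt: "t < real i0 / (real n - 1)" by simp
    have "i0 \<ge> 1"
    proof (rule ccontr)
      assume "\<not> i0 \<ge> 1" then have "i0 = 0" by simp
      then show False using lt assms by simp
    qed
    show ?thesis
    proof (intro exI[of _ i0] disjI2 conjI)
      show "real i0 / real n \<le> t" using fl n0 by (simp add: field_simps)
      show "t \<le> real i0 / (real n - 1)" using lt by simp
    qed (use i0n \<open>i0 \<ge> 1\<close> in auto)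
  qed
qed

lemma uu_lo: "k \<le> p \<Longrightarrow> uu f p q s2 r k = UU f p s2 r (real k)" by (simp add: uu_def)
lemma ww_lo: "k \<le> p \<Longrightarrow> ww f p q s1 r k = DD f p s1 r (real k)" by (simp add: ww_def)
lemma uu_hi: "p \<ge> 2 \<Longrightarrow> q \<ge> 2 \<Longrightarrow> p \<le> k \<Longrightarrow> k \<le> p + q \<Longrightarrow> uu f p q s2 r k = BB f q s2 r (real (p + q - k))"
  by (cases "k = p") (auto simp: uu_def UU_def BB_def field_simps)
lemma ww_hi: "p \<ge> 2 \<Longrightarrow> q \<ge> 2 \<Longrightarrow> p \<le> k \<Longrightarrow> k \<le> p + q \<Longrightarrow> ww f p q s1 r k = AA f q s1 r (real (p + q - k))"
  by (cases "k = p") (auto simp: ww_def DD_def AA_def field_simps)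

lemma mulf: "(a::real) / b \<le> r / f \<Longrightarrow> f > 0 \<Longrightarrow> a * f / b \<le> r"
proof -
  assume h: "a / b \<le> r / f" "f > 0"
  have "a / b * f \<le> r / f * f" by (rule mult_right_mono) (use h in auto)
  then show ?thesis using h by simp
qed

lemma mulf2: "r / f \<le> (a::real) / b \<Longrightarrow> f > 0 \<Longrightarrow> r \<le> a * f / b"
proof -
  assume h: "r / f \<le> a / b" "f > 0"
  have "r / f * f \<le> a / b * f" by (rule mult_right_mono) (use h in auto)
  then show ?thesis using h by simp
qed

lemma per_r:
  fixes f r :: real and p q :: nat
  assumes f0: "0 < f" and f1: "f < 1" and p2: "p \<ge> 2" and q2: "q \<ge> 2" and r0: "0 \<le> r" and r1: "r < 1"
  shows "\<exists>k. (1 \<le> k \<and> k \<le> p+q-1 \<and> (\<forall>s1 s2. (1-f)* s1 \<le> -1 \<longrightarrow> 1 \<le> f* s2 \<longrightarrow>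
              (k > 1 \<longrightarrow> ww f p q s1 r (k-1) \<le> uu f p q s2 r k) \<and>
              (k < p+q-1 \<longrightarrow> uu f p q s2 r (k+1) \<le> ww f p q s1 r k))) \<or>
           (1 \<le> k \<and> k < p+q-1 \<and> (\<forall>s1 s2. (1-f)* s1 \<le> -1 \<longrightarrow> 1 \<le> f* s2 \<longrightarrow>
              ww f p q s1 r k \<le> uu f p q s2 r k \<and> uu f p q s2 r (k+1) \<le> ww f p q s1 r (k+1)))"
proof (cases "r \<le> f")
  case True
  obtain i where i: "(1 \<le> i \<and> i \<le> p \<and> (real i - 1)/(real p - 1) \<le> r/f \<and> r/f \<le> real i/real p) \<or>
     (1 \<le> i \<and> i + 1 \<le> p \<and> real i/real p \<le> r/f \<and> r/f \<le> real i/(real p - 1))"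
    using cover[of p "r/f"] p2 r0 f0 True by auto
  then show ?thesis
  proof (elim disjE conjE)
    assume h: "1 \<le> i" "i \<le> p" "(real i - 1)/(real p - 1) \<le> r/f" "r/f \<le> real i/real p"
    have c1: "(real i - 1) * f / (real p - 1) \<le> r" using mulf[OF h(3) f0] .
    have c2: "r \<le> real i * f / real p" using mulf2[OF h(4) f0] .
    show ?thesis
    proof (intro exI[of _ i] disjI1 conjI allI impI)
      fix s1 s2 assume hx: "(1-f)* s1 \<le> -1" and hy: "1 \<le> f* s2"
      {
        assume "i > 1"
        have "ww f p q s1 r (i-1) = DD f p s1 r (real i - 1)" using h \<open>i > 1\<close> by (simp add: ww_lo of_nat_diff)
        also have "\<dots> \<le> UU f p s2 r (real i)" by (rule A1[OF f0 f1 p2 q2 hx hy]) (use h c1 in auto)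
        also have "\<dots> = uu f p q s2 r i" using h by (simp add: uu_lo add.commute)
        finally show "ww f p q s1 r (i-1) \<le> uu f p q s2 r i" .
      }
      {
        show "uu f p q s2 r (i+1) \<le> ww f p q s1 r i"
        proof (cases "i < p")
          case True
          have "uu f p q s2 r (i+1) = UU f p s2 r (real i + 1)" using True by (simp add: uu_lo add.commute)
          also have "\<dots> \<le> DD f p s1 r (real i)" by (rule A2[OF f0 f1 p2 q2 hx hy]) (use c2 in auto)
          also have "\<dots> = ww f p q s1 r i" using h by (simp add: ww_lo add.commute)
          finally show ?thesis .
        next
          case False
          then have ip: "i = p" using h by simp
          have "uu f p q s2 r (i+1) = BB f q s2 r (real (q - 1))" using ip p2 q2 by (simp add: uu_hi add.commute)
          also have "\<dots> \<le> BB f q s2 r (real q)" by (rule BB_mono[OF f0 f1 p2 q2 hx hy]) auto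
          also have "\<dots> = UU f p s2 r (real p)" by (rule UU_BB[OF f0 f1 p2 q2 hx hy, symmetric])
          also have "\<dots> \<le> DD f p s1 r (real p)" by (rule A2p[OF f0 f1 p2 q2 hx hy True])
          also have "\<dots> = ww f p q s1 r i" using ip by (simp add: ww_lo add.commute)
          finally show ?thesis .
        qed
      }
    qed (use h q2 in auto)
  next
    assume h: "1 \<le> i" "i + 1 \<le> p" "real i/real p \<le> r/f" "r/f \<le> real i/(real p - 1)"
    have c1: "real i * f / real p \<le> r" using mulf[OF h(3) f0] .
    have c2: "r \<le> real i * f / (real p - 1)" using mulf2[OF h(4) f0] .
    show ?thesis
    proof (intro exI[of _ i] disjI2 conjI allI impI)
      fix s1 s2 assume hx: "(1-f)* s1 \<le> -1" and hy: "1 \<le> f* s2"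
      have "ww f p q s1 r i = DD f p s1 r (real i)" using h by (simp add: ww_lo add.commute)
      also have "\<dots> \<le> UU f p s2 r (real i)" by (rule B1[OF f0 f1 p2 q2 hx hy]) (use h c1 in auto)
      also have "\<dots> = uu f p q s2 r i" using h by (simp add: uu_lo add.commute)
      finally show "ww f p q s1 r i \<le> uu f p q s2 r i" .
      have "uu f p q s2 r (i+1) = UU f p s2 r (real i + 1)" using h by (simp add: uu_lo add.commute)
      also have "\<dots> \<le> DD f p s1 r (real i + 1)" by (rule B2[OF f0 f1 p2 q2 hx hy]) (use h c2 in auto)
      also have "\<dots> = ww f p q s1 r (i+1)" using h by (simp add: ww_lo add.commute)
      finally show "uu f p q s2 r (i+1) \<le> ww f p q s1 r (i+1)" .
    qed (use h q2 in auto)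
  qed
next
  case False
  have tq: "0 \<le> (1-r)/(1-f)" "(1-r)/(1-f) \<le> 1" "(1-r)/(1-f) < 1" using False r1 f1 by auto
  have f1': "1 - f > 0" using f1 by simp
  obtain m where m: "(1 \<le> m \<and> m \<le> q \<and> (real m - 1)/(real q - 1) \<le> (1-r)/(1-f) \<and> (1-r)/(1-f) \<le> real m/real q) \<or>
     (1 \<le> m \<and> m + 1 \<le> q \<and> real m/real q \<le> (1-r)/(1-f) \<and> (1-r)/(1-f) \<le> real m/(real q - 1))"
    using cover[of q "(1-r)/(1-f)"] q2 tq by auto
  then show ?thesis
  proof (elim disjE conjE)
    assume h: "1 \<le> m" "m \<le> q" "(real m - 1)/(real q - 1) \<le> (1-r)/(1-f)" "(1-r)/(1-f) \<le> real m/real q"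
    have mq: "m < q"
    proof (rule ccontr)
      assume "\<not> m < q" then have "m = q" using h by simp
      then show False using h(3) tq(3) q2 by simp
    qed
    have c1: "(real m - 1) * (1-f) / (real q - 1) \<le> 1 - r" using mulf[OF h(3) f1'] .
    have c2: "1 - r \<le> real m * (1-f) / real q" using mulf2[OF h(4) f1'] .
    define k where "k = p + q - m"
    have k: "p < k" "k \<le> p+q-1" "p + q - k = m" using h mq unfolding k_def by auto
    show ?thesis
    proof (intro exI[of _ k] disjI1 conjI allI impI)
      fix s1 s2 assume hx: "(1-f)* s1 \<le> -1" and hy: "1 \<le> f* s2"
      {
        have e: "p + q - (k-1) = m + 1" using k by auto
        have "ww f p q s1 r (k-1) = AA f q s1 r (real (p + q - (k-1)))" by (rule ww_hi) (use k p2 q2 in auto)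
        also have "\<dots> = AA f q s1 r (real m + 1)" by (simp only: e of_nat_add of_nat_1)
        also have "\<dots> \<le> BB f q s2 r (real m)" by (rule QA1[OF f0 f1 p2 q2 hx hy]) (use c2 in auto)
        also have "\<dots> = uu f p q s2 r k" using k p2 q2 by (simp add: uu_hi)
        finally show "ww f p q s1 r (k-1) \<le> uu f p q s2 r k" .
      }
      {
        assume "k < p+q-1"
        then have m1: "m > 1" using k by simp
        have e: "p + q - (k+1) = m - 1" using k by auto
        have "uu f p q s2 r (k+1) = BB f q s2 r (real (p + q - (k+1)))" by (rule uu_hi) (use k p2 q2 in auto)
        also have "\<dots> = BB f q s2 r (real m - 1)" using m1 using m1 by (simp only: e of_nat_diff[of 1 m] of_nat_1)
        also have "\<dots> \<le> AA f q s1 r (real m)" by (rule QA2[OF f0 f1 p2 q2 hx hy]) (use h c1 in auto)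
        also have "\<dots> = ww f p q s1 r k" using k p2 q2 by (simp add: ww_hi)
        finally show "uu f p q s2 r (k+1) \<le> ww f p q s1 r k" .
      }
    qed (use k in auto)
  next
    assume h: "1 \<le> m" "m + 1 \<le> q" "real m/real q \<le> (1-r)/(1-f)" "(1-r)/(1-f) \<le> real m/(real q - 1)"
    have c1: "real m * (1-f) / real q \<le> 1 - r" using mulf[OF h(3) f1'] .
    have c2: "1 - r \<le> real m * (1-f) / (real q - 1)" using mulf2[OF h(4) f1'] .
    define k where "k = p + q - m - 1"
    have k: "p \<le> k" "k < p+q-1" "p + q - k = m + 1" "p + q - (k + 1) = m" using h unfolding k_def by auto
    show ?thesis
    proof (intro exI[of _ k] disjI2 conjI allI impI)
      fix s1 s2 assume hx: "(1-f)* s1 \<le> -1" and hy: "1 \<le> f* s2"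
      have "ww f p q s1 r k = AA f q s1 r (real (p + q - k))" by (rule ww_hi) (use k p2 q2 in auto)
      also have "\<dots> = AA f q s1 r (real m + 1)" by (simp only: k(3) of_nat_add of_nat_1)
      also have "\<dots> \<le> BB f q s2 r (real m + 1)" by (rule QB1[OF f0 f1 p2 q2 hx hy]) (use h c2 in auto)
      also have "\<dots> = BB f q s2 r (real (p + q - k))" by (simp only: k(3) of_nat_add of_nat_1)
      also have "\<dots> = uu f p q s2 r k" by (rule uu_hi[symmetric]) (use k p2 q2 in auto)
      finally show "ww f p q s1 r k \<le> uu f p q s2 r k" .
      have "uu f p q s2 r (k+1) = BB f q s2 r (real (p + q - (k+1)))" by (rule uu_hi) (use k p2 q2 in auto)
      also have "\<dots> = BB f q s2 r (real m)" by (simp only: k(4))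
      also have "\<dots> \<le> AA f q s1 r (real m)" by (rule QB2[OF f0 f1 p2 q2 hx hy]) (use h c1 in auto)
      also have "\<dots> = AA f q s1 r (real (p + q - (k+1)))" by (simp only: k(4))
      also have "\<dots> = ww f p q s1 r (k+1)" by (rule ww_hi[symmetric]) (use k p2 q2 in auto)
      finally show "uu f p q s2 r (k+1) \<le> ww f p q s1 r (k+1)" .
    qed (use k p2 in auto)
  qed
qed

lemma uu_aff: assumes "p \<ge> 2" "q \<ge> 2" shows "\<exists>b c. \<forall>s2. uu f p q s2 r k = b * s2 + c"
proof (cases "k \<le> p")
  case True
  have nz: "real p - 1 \<noteq> 0" using assms by auto
  show ?thesis
  proof (intro exI allI)
    fix s2
    show "uu f p q s2 r k = (r - (real k - 1) * f / (real p - 1)) * s2 + (real k - 1) / (real p - 1)"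
      using True nz by (simp add: uu_lo UU_def divide_simps; simp add: algebra_simps)
  qed
next
  case False
  have nz: "real q \<noteq> 0" using assms by auto
  show ?thesis
  proof (intro exI allI)
    fix s2
    show "uu f p q s2 r k = ((r - 1) + real (p + q - k) * (1 - f) / real q) * s2 + real (p + q - k) / real q"
      using False nz unfolding uu_def BB_def by (simp add: divide_simps; simp add: algebra_simps)
  qed
qed

lemma ww_aff: assumes "p \<ge> 2" "q \<ge> 2" shows "\<exists>a c. \<forall>s1. ww f p q s1 r k = a * s1 + c"
proof (cases "k \<le> p")
  case True
  have nz: "real p \<noteq> 0" using assms by auto
  show ?thesis
  proof (intro exI allI)
    fix s1
    show "ww f p q s1 r k = (r - real k * f / real p) * s1 + real k / real p"
      using True nz by (simp add: ww_lo DD_def divide_simps; simp add: algebra_simps)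
  qed
next
  case False
  have nz: "real q - 1 \<noteq> 0" using assms by auto
  show ?thesis
  proof (intro exI allI)
    fix s1
    show "ww f p q s1 r k = ((r - 1) + (real (p + q - k) - 1) * (1 - f) / (real q - 1)) * s1
        + (real (p + q - k) - 1) / (real q - 1)"
      using False nz unfolding ww_def AA_def by (simp add: divide_simps; simp add: algebra_simps)
  qed
qed

lemma D_bounds:
  assumes "(s1, s2) \<in> D_dom f p q" "0 < f" "f < 1"
  shows "(1 - f) * s1 \<le> -1" "1 \<le> f * s2"
proof -
  have h1: "s1 \<le> 1 / (f - 1)" using assms(1) by (auto simp: D_dom_def I1_def split: if_splits)
  have h2: "1 / f \<le> s2" using assms(1) by (auto simp: D_dom_def I2_def split: if_splits)
  have "f - 1 < 0" using assms by simp
  then have "1 \<le> s1 * (f - 1)" using h1 by (simp add: le_divide_eq)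
  then show "(1 - f) * s1 \<le> -1" by (simp add: algebra_simps)
  show "1 \<le> f * s2" using h2 assms(2) by (simp add: divide_le_eq mult.commute)
qed

lemma per_r2:
  fixes f r :: real and p q :: nat
  assumes f0: "0 < f" and f1: "f < 1" and p2: "p \<ge> 2" and q2: "q \<ge> 2" and r0: "0 \<le> r" and r1: "r < 1"
  shows "\<exists>(H::real\<Rightarrow>real\<Rightarrow>real) a1 b1 c1 a2 b2 c2. (H = min \<or> H = max) \<and>
     (\<forall>s1 s2. (s1, s2) \<in> D_dom f p q \<longrightarrow> cgf_pi f p q s1 s2 r = H (a1 * s1 + b1 * s2 + c1) (a2 * s1 + b2 * s2 + c2))"
proof -
  obtain k where k: "(1 \<le> k \<and> k \<le> p+q-1 \<and> (\<forall>s1 s2. (1-f) * s1 \<le> -1 \<longrightarrow> 1 \<le> f * s2 \<longrightarrow>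
              (k > 1 \<longrightarrow> ww f p q s1 r (k-1) \<le> uu f p q s2 r k) \<and>
              (k < p+q-1 \<longrightarrow> uu f p q s2 r (k+1) \<le> ww f p q s1 r k))) \<or>
           (1 \<le> k \<and> k < p+q-1 \<and> (\<forall>s1 s2. (1-f) * s1 \<le> -1 \<longrightarrow> 1 \<le> f * s2 \<longrightarrow>
              ww f p q s1 r k \<le> uu f p q s2 r k \<and> uu f p q s2 r (k+1) \<le> ww f p q s1 r (k+1)))"
    using per_r[OF assms] by blast
  then show ?thesis
  proof (elim disjE conjE)
    assume k1: "1 \<le> k" and k2: "k \<le> p+q-1" and kc: "\<forall>s1 s2. (1-f) * s1 \<le> -1 \<longrightarrow> 1 \<le> f * s2 \<longrightarrow>
              (k > 1 \<longrightarrow> ww f p q s1 r (k-1) \<le> uu f p q s2 r k) \<and>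
              (k < p+q-1 \<longrightarrow> uu f p q s2 r (k+1) \<le> ww f p q s1 r k)"
    obtain a c where a: "\<forall>s1. ww f p q s1 r k = a * s1 + c" using ww_aff[OF p2 q2] by blast
    obtain b d where b: "\<forall>s2. uu f p q s2 r k = b * s2 + d" using uu_aff[OF p2 q2] by blast
    show ?thesis
    proof (intro exI conjI allI impI)
      fix s1 s2 assume D: "(s1, s2) \<in> D_dom f p q"
      note hx = D_bounds(1)[OF D f0 f1] and hy = D_bounds(2)[OF D f0 f1]
      have "cgf_pi f p q s1 s2 r = Max ((\<lambda>k. min (ww f p q s1 r k) (uu f p q s2 r k)) ` {1..p+q-1})"
        by (rule pi_eq[OF p2 q2])
      also have "\<dots> = min (ww f p q s1 r k) (uu f p q s2 r k)"
        by (rule tentA[OF k1 k2 uu_anti[OF f0 f1 p2 q2 hx hy] ww_mono[OF f0 f1 p2 q2 hx hy]])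
           (use kc hx hy in auto)
      also have "\<dots> = min (a * s1 + 0 * s2 + c) (0 * s1 + b * s2 + d)" using a b by simp
      finally show "cgf_pi f p q s1 s2 r = min (a * s1 + 0 * s2 + c) (0 * s1 + b * s2 + d)" .
    qed simp
  next
    assume k1: "1 \<le> k" and k2: "k < p+q-1" and kc: "\<forall>s1 s2. (1-f) * s1 \<le> -1 \<longrightarrow> 1 \<le> f * s2 \<longrightarrow>
              ww f p q s1 r k \<le> uu f p q s2 r k \<and> uu f p q s2 r (k+1) \<le> ww f p q s1 r (k+1)"
    obtain a c where a: "\<forall>s1. ww f p q s1 r k = a * s1 + c" using ww_aff[OF p2 q2] by blast
    obtain b d where b: "\<forall>s2. uu f p q s2 r (k+1) = b * s2 + d" using uu_aff[OF p2 q2] by blast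
    show ?thesis
    proof (intro exI conjI allI impI)
      fix s1 s2 assume D: "(s1, s2) \<in> D_dom f p q"
      note hx = D_bounds(1)[OF D f0 f1] and hy = D_bounds(2)[OF D f0 f1]
      have "cgf_pi f p q s1 s2 r = Max ((\<lambda>k. min (ww f p q s1 r k) (uu f p q s2 r k)) ` {1..p+q-1})"
        by (rule pi_eq[OF p2 q2])
      also have "\<dots> = max (ww f p q s1 r k) (uu f p q s2 r (k+1))"
        by (rule tentB[OF k1 k2 uu_anti[OF f0 f1 p2 q2 hx hy] ww_mono[OF f0 f1 p2 q2 hx hy]])
           (use kc hx hy in auto)
      also have "\<dots> = max (a * s1 + 0 * s2 + c) (0 * s1 + b * s2 + d)" using a b by simp
      finally show "cgf_pi f p q s1 s2 r = max (a * s1 + 0 * s2 + c) (0 * s1 + b * s2 + d)" .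
    qed simp
  qed
qed

lemma collect:
  fixes D :: "(real \<times> real) set"
  assumes "\<forall>r\<in>set rs. \<exists>l::(real\<times>real\<times>real) list. length l \<le> 1 \<and> (\<forall>(a,b,c)\<in>set l. (a,b) \<noteq> (0,0)) \<and>
    (\<forall>C. connected C \<longrightarrow> C \<subseteq> D \<longrightarrow> C \<inter> (\<Union>x\<in>set l. line_of x) = {} \<longrightarrow> P r C)"
  shows "\<exists>L::(real\<times>real\<times>real) list. length L \<le> length rs \<and> (\<forall>(a,b,c)\<in>set L. (a,b) \<noteq> (0,0)) \<and>
    (\<forall>C. connected C \<longrightarrow> C \<subseteq> D \<longrightarrow> C \<inter> (\<Union>x\<in>set L. line_of x) = {} \<longrightarrow> (\<forall>r\<in>set rs. P r C))"
  using assms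
proof (induction rs)
  case Nil
  then show ?case by (intro exI[of _ "[]"]) auto
next
  case (Cons r rs)
  then obtain L where L: "length L \<le> length rs" "\<forall>(a,b,c)\<in>set L. (a,b) \<noteq> (0,0)"
    "\<forall>C. connected C \<longrightarrow> C \<subseteq> D \<longrightarrow> C \<inter> (\<Union>x\<in>set L. line_of x) = {} \<longrightarrow> (\<forall>r\<in>set rs. P r C)"
    by auto
  from Cons.prems obtain l where l: "length l \<le> 1" "\<forall>(a,b,c)\<in>set l. (a,b) \<noteq> (0,0)"
    "\<forall>C. connected C \<longrightarrow> C \<subseteq> D \<longrightarrow> C \<inter> (\<Union>x\<in>set l. line_of x) = {} \<longrightarrow> P r C"
    by auto
  show ?case
  proof (intro exI[of _ "l @ L"] conjI allI impI)
    show "length (l @ L) \<le> length (r # rs)" using L l by simp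
    show "\<forall>(a,b,c)\<in>set (l @ L). (a,b) \<noteq> (0,0)" using L(2) l(2) by auto
    fix C :: "(real \<times> real) set" assume "connected C" "C \<subseteq> D" "C \<inter> (\<Union>x\<in>set (l @ L). line_of x) = {}"
    then have c: "connected C" "C \<subseteq> D" "C \<inter> (\<Union>x\<in>set l. line_of x) = {}" "C \<inter> (\<Union>x\<in>set L. line_of x) = {}"
      by auto
    then show "\<forall>r'\<in>set (r # rs). P r' C" using L(3) l(3) by simp
  qed
qed

lemma per_r3:
  fixes f r :: real and p q :: nat
  assumes f0: "0 < f" and f1: "f < 1" and p2: "p \<ge> 2" and q2: "q \<ge> 2" and r0: "0 \<le> r" and r1: "r < 1"
  shows "\<exists>l::(real\<times>real\<times>real) list. length l \<le> 1 \<and> (\<forall>(a,b,c)\<in>set l. (a,b) \<noteq> (0,0)) \<and>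
    (\<forall>C. connected C \<longrightarrow> C \<subseteq> D_dom f p q \<longrightarrow> C \<inter> (\<Union>x\<in>set l. line_of x) = {} \<longrightarrow>
       (\<exists>\<alpha> \<beta> \<gamma>. \<forall>(s1,s2)\<in>C. cgf_pi f p q s1 s2 r = \<alpha> * s1 + \<beta> * s2 + \<gamma>))"
proof -
  obtain H :: "real \<Rightarrow> real \<Rightarrow> real" and a1 b1 c1 a2 b2 c2 where
    H: "H = min \<or> H = max"
    and hF: "\<forall>s1 s2. (s1, s2) \<in> D_dom f p q \<longrightarrow> cgf_pi f p q s1 s2 r = H (a1 * s1 + b1 * s2 + c1) (a2 * s1 + b2 * s2 + c2)"
    using per_r2[OF assms] by blast
  have hF': "\<And>s1 s2. (s1, s2) \<in> D_dom f p q \<Longrightarrow> cgf_pi f p q s1 s2 r = H (a1 * s1 + b1 * s2 + c1) (a2 * s1 + b2 * s2 + c2)"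
    using hF by blast
  show ?thesis using piece_lines[where F="\<lambda>s1 s2. cgf_pi f p q s1 s2 r", OF hF' H] by simp
qed

theorem proposition1:
  fixes f :: real and p q :: nat and rs :: "real list"
  assumes "0 < f" "f < 1" "p \<ge> 2" "q \<ge> 2"
    and "\<forall>r\<in>set rs. 0 \<le> r \<and> r < 1"
  shows "\<exists>L :: (real \<times> real \<times> real) list.
           length L \<le> length rs
         \<and> (\<forall>(a, b, c)\<in>set L. (a, b) \<noteq> (0, 0))
         \<and> (\<forall>C\<in>components (D_dom f p q - (\<Union>l\<in>set L. line_of l)).
              \<forall>r\<in>set rs. \<exists>\<alpha> \<beta> \<gamma>. \<forall>(s1, s2)\<in>C.
                 cgf_pi f p q s1 s2 r = \<alpha> * s1 + \<beta> * s2 + \<gamma>)"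
proof -
  have "\<forall>r\<in>set rs. \<exists>l::(real\<times>real\<times>real) list. length l \<le> 1 \<and> (\<forall>(a,b,c)\<in>set l. (a,b) \<noteq> (0,0)) \<and>
    (\<forall>C. connected C \<longrightarrow> C \<subseteq> D_dom f p q \<longrightarrow> C \<inter> (\<Union>x\<in>set l. line_of x) = {} \<longrightarrow>
       (\<exists>\<alpha> \<beta> \<gamma>. \<forall>(s1,s2)\<in>C. cgf_pi f p q s1 s2 r = \<alpha> * s1 + \<beta> * s2 + \<gamma>))"
    using per_r3[OF assms(1-4)] assms(5) by blast
  from collect[OF this] obtain L :: "(real\<times>real\<times>real) list" where
    L: "length L \<le> length rs" "\<forall>(a,b,c)\<in>set L. (a,b) \<noteq> (0,0)"
    "\<forall>C. connected C \<longrightarrow> C \<subseteq> D_dom f p q \<longrightarrow> C \<inter> (\<Union>x\<in>set L. line_of x) = {} \<longrightarrow>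
       (\<forall>r\<in>set rs. \<exists>\<alpha> \<beta> \<gamma>. \<forall>(s1,s2)\<in>C. cgf_pi f p q s1 s2 r = \<alpha> * s1 + \<beta> * s2 + \<gamma>)"
    by blast
  have third: "\<forall>C\<in>components (D_dom f p q - (\<Union>l\<in>set L. line_of l)).
              \<forall>r\<in>set rs. \<exists>\<alpha> \<beta> \<gamma>. \<forall>(s1, s2)\<in>C.
                 cgf_pi f p q s1 s2 r = \<alpha> * s1 + \<beta> * s2 + \<gamma>"
  proof (intro ballI)
    fix C r assume C: "C \<in> components (D_dom f p q - (\<Union>l\<in>set L. line_of l))" and r: "r \<in> set rs"
    have "connected C" using in_components_connected[OF C] .
    moreover have "C \<subseteq> D_dom f p q" "C \<inter> (\<Union>x\<in>set L. line_of x) = {}" using in_components_subset[OF C] by auto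
    ultimately show "\<exists>\<alpha> \<beta> \<gamma>. \<forall>(s1, s2)\<in>C. cgf_pi f p q s1 s2 r = \<alpha> * s1 + \<beta> * s2 + \<gamma>"
      using L(3) r by blast
  qed
  show ?thesis using L(1) L(2) third by blast
qed

end
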